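(* Consider a random family with random number of children $N\ge 1$ and sexes $S_1,S_2,\dots\in\{\mathrm{M},\mathrm{F}\}$ of its children in birth order ($S_k$ defined on the event $N\ge k$). Assume: (i) (random coin toss) there is $p_M\in(0,1)$ such that $P(S_1=\mathrm{M})=p_M$ and, for every $k\ge 2$, $P(S_k=\mathrm{M}\mid N\ge k, S_1,\dots,S_{k-1})=p_M$; write $p_F=1-p_M$; (ii) the sex of the first child does not predict whether the family has a second child: $P(N\ge 2\mid S_1=\mathrm{M})=P(N\ge2\mid S_1=\mathrm{F})$; (iii) there are numbers $p_S>0$ and $p_D$ with $P(N\ge 3\mid N\ge 2, S_1=S_2=\mathrm{M})=P(N\ge 3\mid N\ge 2, S_1=S_2=\mathrm{F})=p_S$ and $P(N\ge 3\mid N\ge 2, S_1=\mathrm{M},S_2=\mathrm{F})=P(N\ge 3\mid N\ge 2, S_1=\mathrm{F},S_2=\mathrm{M})=p_D$. Then \[ P\left(\text{MM? or FF?}\mid N\geq 3\right) =\frac{1}{2 p_Fp_M p_D/p_S +p_F^2+p_M^2}\bigl(p_M^2+p_F^2\bigr). \] If additionally $p_S>p_D$, then \[ \frac{1}{2 p_Fp_M p_D/p_S +p_F^2+p_M^2}>1. \]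
   Context: All births are singletons. "MM?" denotes the event $S_1=S_2=\mathrm{M}$ (the sex of the third child is ignored), and "FF?" denotes $S_1=S_2=\mathrm{F}$; these are considered together with the conditioning event $N\ge 3$. All conditioning events appearing are assumed to have positive probability. *)

theory Defs
  imports "HOL-Probability.Probability"
begin

datatype sex = Male | Female

definition cprob :: "'a measure \<Rightarrow> 'a set \<Rightarrow> 'a set \<Rightarrow> real" where
  "cprob M A B = measure M (A \<inter> B) / measure M B"

end

theory Submission
  imports Defs
begin

theorem theorem2:
  fixes M :: "'a measure"
    and N :: "'a \<Rightarrow> nat"
    and S :: "nat \<Rightarrow> 'a \<Rightarrow> sex"
    and pM pF pS pD :: real
  assumes ps: "prob_space M"
    and N_meas: "N \<in> measurable M (count_space UNIV)"
    and S_meas: "\<And>k. S k \<in> measurable M (count_space UNIV)"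
    and N_ge1: "\<And>\<omega>. \<omega> \<in> space M \<Longrightarrow> N \<omega> \<ge> 1"
    and pM: "0 < pM" "pM < 1"
    and pF: "pF = 1 - pM"
    and coin1: "measure M {\<omega> \<in> space M. S 1 \<omega> = Male} = pM"
    and coin: "\<And>k s. k \<ge> 2 \<Longrightarrow>
        measure M {\<omega> \<in> space M. N \<omega> \<ge> k \<and> (\<forall>j\<in>{1..<k}. S j \<omega> = s j)} > 0 \<Longrightarrow>
        cprob M {\<omega> \<in> space M. S k \<omega> = Male}
                {\<omega> \<in> space M. N \<omega> \<ge> k \<and> (\<forall>j\<in>{1..<k}. S j \<omega> = s j)} = pM"
    and second: "cprob M {\<omega> \<in> space M. N \<omega> \<ge> 2} {\<omega> \<in> space M. S 1 \<omega> = Male}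
               = cprob M {\<omega> \<in> space M. N \<omega> \<ge> 2} {\<omega> \<in> space M. S 1 \<omega> = Female}"
    and pos_MM: "measure M {\<omega> \<in> space M. N \<omega> \<ge> 2 \<and> S 1 \<omega> = Male \<and> S 2 \<omega> = Male} > 0"
    and pos_FF: "measure M {\<omega> \<in> space M. N \<omega> \<ge> 2 \<and> S 1 \<omega> = Female \<and> S 2 \<omega> = Female} > 0"
    and pos_MF: "measure M {\<omega> \<in> space M. N \<omega> \<ge> 2 \<and> S 1 \<omega> = Male \<and> S 2 \<omega> = Female} > 0"
    and pos_FM: "measure M {\<omega> \<in> space M. N \<omega> \<ge> 2 \<and> S 1 \<omega> = Female \<and> S 2 \<omega> = Male} > 0"
    and pos_N3: "measure M {\<omega> \<in> space M. N \<omega> \<ge> 3} > 0"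
    and pS_pos: "pS > 0"
    and SS_MM: "cprob M {\<omega> \<in> space M. N \<omega> \<ge> 3}
                  {\<omega> \<in> space M. N \<omega> \<ge> 2 \<and> S 1 \<omega> = Male \<and> S 2 \<omega> = Male} = pS"
    and SS_FF: "cprob M {\<omega> \<in> space M. N \<omega> \<ge> 3}
                  {\<omega> \<in> space M. N \<omega> \<ge> 2 \<and> S 1 \<omega> = Female \<and> S 2 \<omega> = Female} = pS"
    and DD_MF: "cprob M {\<omega> \<in> space M. N \<omega> \<ge> 3}
                  {\<omega> \<in> space M. N \<omega> \<ge> 2 \<and> S 1 \<omega> = Male \<and> S 2 \<omega> = Female} = pD"
    and DD_FM: "cprob M {\<omega> \<in> space M. N \<omega> \<ge> 3}
                  {\<omega> \<in> space M. N \<omega> \<ge> 2 \<and> S 1 \<omega> = Female \<and> S 2 \<omega> = Male} = pD"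
  shows "cprob M {\<omega> \<in> space M. S 1 \<omega> = S 2 \<omega>} {\<omega> \<in> space M. N \<omega> \<ge> 3}
           = 1 / (2 * pF * pM * pD / pS + pF\<^sup>2 + pM\<^sup>2) * (pM\<^sup>2 + pF\<^sup>2)
         \<and> (pS > pD \<longrightarrow> 1 / (2 * pF * pM * pD / pS + pF\<^sup>2 + pM\<^sup>2) > 1)"
proof -
  interpret prob_space M by (rule ps)
  note [measurable] = N_meas S_meas
  have one12: "{1..<2::nat} = {1}" by auto
  have sx: "\<And>x. (x \<noteq> Male) = (x = Female)" by (case_tac x) auto
  have split: "\<And>P Q. {\<omega>\<in>space M. P \<omega>} \<in> sets M \<Longrightarrow> {\<omega>\<in>space M. Q \<omega>} \<in> sets M \<Longrightarrow>
     measure M {\<omega>\<in>space M. P \<omega>} = measure M {\<omega>\<in>space M. P \<omega> \<and> Q \<omega>} + measure M {\<omega>\<in>space M. P \<omega> \<and> \<not> Q \<omega>}"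
  proof -
    fix P Q assume h: "{\<omega>\<in>space M. P \<omega>} \<in> sets M" "{\<omega>\<in>space M. Q \<omega>} \<in> sets M"
    have e: "{\<omega>\<in>space M. P \<omega>} = {\<omega>\<in>space M. P \<omega> \<and> Q \<omega>} \<union> {\<omega>\<in>space M. P \<omega> \<and> \<not> Q \<omega>}" by auto
    have s1: "{\<omega>\<in>space M. P \<omega> \<and> Q \<omega>} \<in> sets M" using h by auto
    have s2: "{\<omega>\<in>space M. P \<omega> \<and> \<not> Q \<omega>} \<in> sets M" using h by auto
    show "measure M {\<omega>\<in>space M. P \<omega>} = measure M {\<omega>\<in>space M. P \<omega> \<and> Q \<omega>} + measure M {\<omega>\<in>space M. P \<omega> \<and> \<not> Q \<omega>}"
      apply (subst e) by (rule finite_measure_Union[OF s1 s2]) auto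
  qed
  define a where "a = measure M {\<omega>\<in>space M. N \<omega> \<ge> 2 \<and> S 1 \<omega> = Male}"
  define b where "b = measure M {\<omega>\<in>space M. N \<omega> \<ge> 2 \<and> S 1 \<omega> = Female}"
  define mm where "mm = measure M {\<omega> \<in> space M. N \<omega> \<ge> 2 \<and> S 1 \<omega> = Male \<and> S 2 \<omega> = Male}"
  define mf where "mf = measure M {\<omega> \<in> space M. N \<omega> \<ge> 2 \<and> S 1 \<omega> = Male \<and> S 2 \<omega> = Female}"
  define fm where "fm = measure M {\<omega> \<in> space M. N \<omega> \<ge> 2 \<and> S 1 \<omega> = Female \<and> S 2 \<omega> = Male}"
  define ff where "ff = measure M {\<omega> \<in> space M. N \<omega> \<ge> 2 \<and> S 1 \<omega> = Female \<and> S 2 \<omega> = Female}"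
  define tmm where "tmm = measure M {\<omega> \<in> space M. N \<omega> \<ge> 3 \<and> S 1 \<omega> = Male \<and> S 2 \<omega> = Male}"
  define tmf where "tmf = measure M {\<omega> \<in> space M. N \<omega> \<ge> 3 \<and> S 1 \<omega> = Male \<and> S 2 \<omega> = Female}"
  define tfm where "tfm = measure M {\<omega> \<in> space M. N \<omega> \<ge> 3 \<and> S 1 \<omega> = Female \<and> S 2 \<omega> = Male}"
  define tff where "tff = measure M {\<omega> \<in> space M. N \<omega> \<ge> 3 \<and> S 1 \<omega> = Female \<and> S 2 \<omega> = Female}"
  define t where "t = measure M {\<omega> \<in> space M. N \<omega> \<ge> 3}"
  have f1: "measure M {\<omega>\<in>space M. S 1 \<omega> = Female} = pF"
  proof -
    have "measure M {\<omega>\<in>space M. True} = measure M {\<omega>\<in>space M. True \<and> S 1 \<omega> = Male} + measure M {\<omega>\<in>space M. True \<and> S 1 \<omega> \<noteq> Male}"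
      by (rule split) measurable
    then show ?thesis using coin1 pF by (simp add: sx prob_space)
  qed
  have ab: "a = mm + mf"
  proof -
    have "a = measure M {\<omega>\<in>space M. (N \<omega> \<ge> 2 \<and> S 1 \<omega> = Male) \<and> S 2 \<omega> = Male} + measure M {\<omega>\<in>space M. (N \<omega> \<ge> 2 \<and> S 1 \<omega> = Male) \<and> S 2 \<omega> \<noteq> Male}"
      unfolding a_def by (rule split) measurable
    then show ?thesis unfolding mm_def mf_def by (simp add: sx conj_assoc)
  qed
  have bb: "b = fm + ff"
  proof -
    have "b = measure M {\<omega>\<in>space M. (N \<omega> \<ge> 2 \<and> S 1 \<omega> = Female) \<and> S 2 \<omega> = Male} + measure M {\<omega>\<in>space M. (N \<omega> \<ge> 2 \<and> S 1 \<omega> = Female) \<and> S 2 \<omega> \<noteq> Male}"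
      unfolding b_def by (rule split) measurable
    then show ?thesis unfolding fm_def ff_def by (simp add: sx conj_assoc)
  qed
  have tt: "t = tmm + tmf + tfm + tff"
  proof -
    have "t = measure M {\<omega>\<in>space M. N \<omega> \<ge> 3 \<and> S 1 \<omega> = Male} + measure M {\<omega>\<in>space M. N \<omega> \<ge> 3 \<and> S 1 \<omega> \<noteq> Male}"
      unfolding t_def by (rule split) measurable
    moreover have "measure M {\<omega>\<in>space M. N \<omega> \<ge> 3 \<and> S 1 \<omega> = Male} = measure M {\<omega>\<in>space M. (N \<omega> \<ge> 3 \<and> S 1 \<omega> = Male) \<and> S 2 \<omega> = Male} + measure M {\<omega>\<in>space M. (N \<omega> \<ge> 3 \<and> S 1 \<omega> = Male) \<and> S 2 \<omega> \<noteq> Male}"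
      by (rule split) measurable
    moreover have "measure M {\<omega>\<in>space M. N \<omega> \<ge> 3 \<and> S 1 \<omega> \<noteq> Male} = measure M {\<omega>\<in>space M. (N \<omega> \<ge> 3 \<and> S 1 \<omega> \<noteq> Male) \<and> S 2 \<omega> = Male} + measure M {\<omega>\<in>space M. (N \<omega> \<ge> 3 \<and> S 1 \<omega> \<noteq> Male) \<and> S 2 \<omega> \<noteq> Male}"
      by (rule split) measurable
    ultimately show ?thesis unfolding tmm_def tmf_def tfm_def tff_def by (simp add: sx conj_assoc)
  qed
  have eqs: "measure M ({\<omega> \<in> space M. S 1 \<omega> = S 2 \<omega>} \<inter> {\<omega> \<in> space M. N \<omega> \<ge> 3}) = tmm + tff"
  proof -
    have "measure M ({\<omega> \<in> space M. S 1 \<omega> = S 2 \<omega>} \<inter> {\<omega> \<in> space M. N \<omega> \<ge> 3})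
       = measure M {\<omega>\<in>space M. (S 1 \<omega> = S 2 \<omega> \<and> N \<omega> \<ge> 3) \<and> S 1 \<omega> = Male} + measure M {\<omega>\<in>space M. (S 1 \<omega> = S 2 \<omega> \<and> N \<omega> \<ge> 3) \<and> S 1 \<omega> \<noteq> Male}"
    proof -
      have e0: "{\<omega> \<in> space M. S 1 \<omega> = S 2 \<omega>} \<inter> {\<omega> \<in> space M. N \<omega> \<ge> 3} = {\<omega>\<in>space M. S 1 \<omega> = S 2 \<omega> \<and> N \<omega> \<ge> 3}" by auto
      show ?thesis unfolding e0
      proof (rule split)
        have "{\<omega>\<in>space M. S 1 \<omega> = S 2 \<omega> \<and> N \<omega> \<ge> 3} = {\<omega>\<in>space M. (S 1 \<omega> = Male \<and> S 2 \<omega> = Male \<or> S 1 \<omega> = Female \<and> S 2 \<omega> = Female) \<and> N \<omega> \<ge> 3}"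
          by (metis (no_types, lifting) sex.exhaust)
        also have "\<dots> \<in> sets M" by measurable
        finally show "{\<omega>\<in>space M. S 1 \<omega> = S 2 \<omega> \<and> N \<omega> \<ge> 3} \<in> sets M" .
      qed measurable
    qed
    also have "\<dots> = tmm + tff" unfolding tmm_def tff_def
      by (intro arg_cong2[where f="(+)"] arg_cong[where f="measure M"]) (auto simp: sx)
    finally show ?thesis .
  qed
  have mmpos: "mm > 0" "mf > 0" "fm > 0" "ff > 0" using pos_MM pos_MF pos_FM pos_FF mm_def mf_def fm_def ff_def by auto
  have sec: "a / pM = b / pF"
  proof -
    have e1: "{\<omega> \<in> space M. N \<omega> \<ge> 2} \<inter> {\<omega> \<in> space M. S 1 \<omega> = Male} = {\<omega>\<in>space M. N \<omega> \<ge> 2 \<and> S 1 \<omega> = Male}" by auto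
    have e2: "{\<omega> \<in> space M. N \<omega> \<ge> 2} \<inter> {\<omega> \<in> space M. S 1 \<omega> = Female} = {\<omega>\<in>space M. N \<omega> \<ge> 2 \<and> S 1 \<omega> = Female}" by auto
    show ?thesis using second unfolding cprob_def e1 e2 coin1 f1 a_def b_def .
  qed
  have c1: "mm = pM * a"
  proof -
    have e: "{\<omega> \<in> space M. N \<omega> \<ge> 2 \<and> (\<forall>j\<in>{1..<2}. S j \<omega> = (\<lambda>_. Male) j)} = {\<omega>\<in>space M. N \<omega> \<ge> 2 \<and> S 1 \<omega> = Male}" unfolding one12 by simp
    have e2: "{\<omega> \<in> space M. S 2 \<omega> = Male} \<inter> {\<omega>\<in>space M. N \<omega> \<ge> 2 \<and> S 1 \<omega> = Male} = {\<omega> \<in> space M. N \<omega> \<ge> 2 \<and> S 1 \<omega> = Male \<and> S 2 \<omega> = Male}" by auto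
    have "a > 0" using ab mmpos by auto
    then have "cprob M {\<omega> \<in> space M. S 2 \<omega> = Male} {\<omega>\<in>space M. N \<omega> \<ge> 2 \<and> S 1 \<omega> = Male} = pM"
      using coin[of 2 "\<lambda>_. Male"] unfolding e a_def by auto
    then have "mm / a = pM" unfolding cprob_def e2 mm_def a_def .
    then show ?thesis using \<open>a > 0\<close> by (simp add: field_simps)
  qed
  have c2: "fm = pM * b"
  proof -
    have e: "{\<omega> \<in> space M. N \<omega> \<ge> 2 \<and> (\<forall>j\<in>{1..<2}. S j \<omega> = (\<lambda>_. Female) j)} = {\<omega>\<in>space M. N \<omega> \<ge> 2 \<and> S 1 \<omega> = Female}" unfolding one12 by simp
    have e2: "{\<omega> \<in> space M. S 2 \<omega> = Male} \<inter> {\<omega>\<in>space M. N \<omega> \<ge> 2 \<and> S 1 \<omega> = Female} = {\<omega> \<in> space M. N \<omega> \<ge> 2 \<and> S 1 \<omega> = Female \<and> S 2 \<omega> = Male}" by auto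
    have "b > 0" using bb mmpos by auto
    then have "cprob M {\<omega> \<in> space M. S 2 \<omega> = Male} {\<omega>\<in>space M. N \<omega> \<ge> 2 \<and> S 1 \<omega> = Female} = pM"
      using coin[of 2 "\<lambda>_. Female"] unfolding e b_def by auto
    then have "fm / b = pM" unfolding cprob_def e2 fm_def b_def .
    then show ?thesis using \<open>b > 0\<close> by (simp add: field_simps)
  qed
  have t1: "tmm = pS * mm"
  proof -
    have e: "{\<omega> \<in> space M. N \<omega> \<ge> 3} \<inter> {\<omega> \<in> space M. N \<omega> \<ge> 2 \<and> S 1 \<omega> = Male \<and> S 2 \<omega> = Male} = {\<omega> \<in> space M. N \<omega> \<ge> 3 \<and> S 1 \<omega> = Male \<and> S 2 \<omega> = Male}" by auto
    have "tmm / mm = pS" using SS_MM unfolding cprob_def e tmm_def mm_def .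
    then show ?thesis using mmpos by (simp add: field_simps)
  qed
  have t2: "tmf = pD * mf"
  proof -
    have e: "{\<omega> \<in> space M. N \<omega> \<ge> 3} \<inter> {\<omega> \<in> space M. N \<omega> \<ge> 2 \<and> S 1 \<omega> = Male \<and> S 2 \<omega> = Female} = {\<omega> \<in> space M. N \<omega> \<ge> 3 \<and> S 1 \<omega> = Male \<and> S 2 \<omega> = Female}" by auto
    have "tmf / mf = pD" using DD_MF unfolding cprob_def e tmf_def mf_def .
    then show ?thesis using mmpos by (simp add: field_simps)
  qed
  have t3: "tfm = pD * fm"
  proof -
    have e: "{\<omega> \<in> space M. N \<omega> \<ge> 3} \<inter> {\<omega> \<in> space M. N \<omega> \<ge> 2 \<and> S 1 \<omega> = Female \<and> S 2 \<omega> = Male} = {\<omega> \<in> space M. N \<omega> \<ge> 3 \<and> S 1 \<omega> = Female \<and> S 2 \<omega> = Male}" by auto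
    have "tfm / fm = pD" using DD_FM unfolding cprob_def e tfm_def fm_def .
    then show ?thesis using mmpos by (simp add: field_simps)
  qed
  have t4: "tff = pS * ff"
  proof -
    have e: "{\<omega> \<in> space M. N \<omega> \<ge> 3} \<inter> {\<omega> \<in> space M. N \<omega> \<ge> 2 \<and> S 1 \<omega> = Female \<and> S 2 \<omega> = Female} = {\<omega> \<in> space M. N \<omega> \<ge> 3 \<and> S 1 \<omega> = Female \<and> S 2 \<omega> = Female}" by auto
    have "tff / ff = pS" using SS_FF unfolding cprob_def e tff_def ff_def .
    then show ?thesis using mmpos by (simp add: field_simps)
  qed
  have pDnn: "pD \<ge> 0" using t2 mmpos tmf_def by (metis measure_nonneg zero_le_mult_iff not_le)
  have pFpos: "pF > 0" using pF pM by simp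
  define q where "q = a / pM"
  have aq: "a = pM * q" using pM q_def by simp
  have bq: "b = pF * q" using sec pFpos q_def by (simp add: field_simps)
  have qpos: "q > 0" unfolding q_def using ab mmpos pM by simp
  have mmq1: "mm = pM^2 * q" using c1 aq by (simp add: power2_eq_square)
  have mmq2: "mf = pM * pF * q"
  proof -
    have "mf = a - mm" using ab by simp
    also have "\<dots> = pM * q * (1 - pM)" using c1 aq by (simp add: algebra_simps)
    finally show ?thesis using pF by simp
  qed
  have mmq3: "fm = pM * pF * q" using c2 bq by simp
  have mmq4: "ff = pF^2 * q"
  proof -
    have "ff = b - fm" using bb by simp
    also have "\<dots> = pF * q * (1 - pM)" using c2 bq by (simp add: algebra_simps)
    finally show ?thesis using pF by (simp add: power2_eq_square)
  qed
  note mmq = mmq1 mmq2 mmq3 mmq4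
  have D: "2 * pF * pM * pD / pS + pF\<^sup>2 + pM\<^sup>2 > 0"
    using pFpos pM pDnn pS_pos by (intro add_nonneg_pos) auto
  have main: "cprob M {\<omega> \<in> space M. S 1 \<omega> = S 2 \<omega>} {\<omega> \<in> space M. N \<omega> \<ge> 3}
           = 1 / (2 * pF * pM * pD / pS + pF\<^sup>2 + pM\<^sup>2) * (pM\<^sup>2 + pF\<^sup>2)"
  proof -
    define X where "X = 2 * pF * pM * pD / pS + pF\<^sup>2 + pM\<^sup>2"
    have den: "tmm + tmf + tfm + tff = (q * pS) * X"
      unfolding X_def t1 t2 t3 t4 mmq using pS_pos
      by (simp add: distrib_left ring_distribs)
    have num: "tmm + tff = (q * pS) * (pM\<^sup>2 + pF\<^sup>2)"
      unfolding t1 t4 mmq by (simp add: algebra_simps)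
    have qs: "q * pS \<noteq> 0" using qpos pS_pos by simp
    show ?thesis unfolding cprob_def eqs t_def[symmetric] tt den num X_def[symmetric]
      using qs by simp
  qed
  have ineq: "pS > pD \<longrightarrow> 1 / (2 * pF * pM * pD / pS + pF\<^sup>2 + pM\<^sup>2) > 1"
  proof
    assume "pS > pD"
    then have "pD / pS < 1" using pS_pos by simp
    then have "2 * pF * pM * (pD / pS) < 2 * pF * pM * 1"
      using pFpos pM by (intro mult_strict_left_mono) auto
    then have "2 * pF * pM * pD / pS < 2 * pF * pM" by simp
    moreover have "pF\<^sup>2 + pM\<^sup>2 + 2 * pF * pM = 1"
    proof -
      have "pF\<^sup>2 + pM\<^sup>2 + 2 * pF * pM = (pF + pM)\<^sup>2" by (simp add: power2_eq_square algebra_simps)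
      then show ?thesis using pF by simp
    qed
    ultimately have "2 * pF * pM * pD / pS + pF\<^sup>2 + pM\<^sup>2 < 1" by simp
    then show "1 / (2 * pF * pM * pD / pS + pF\<^sup>2 + pM\<^sup>2) > 1" using D by simp
  qed
  show ?thesis using main ineq by blast
qed

end
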